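(* Let $Z$ be the tree obtained from four disjoint 3-stars $S_0,S_1,S_2,S_3$, where $S_i$ has center $u_i$ and leaves $a_i,b_i,c_i$, by identifying $c_0$ with $c_1$, $a_0$ with $c_2$, and $a_1$ with $c_3$ (so $Z$ has $13$ vertices, maximum degree $3$ and diameter $8$). Then $\gamma^{\rm ID}(Z)=8<\frac23|V(Z)|$.
   Context: An identifying code of a graph $G$ is a set $C\subseteq V(G)$ such that every vertex $v$ has $N[v]\cap C\neq\emptyset$ and for all distinct $u,v$, $N[u]\cap C \ne N[v]\cap C$, where $N[v]$ is the closed neighborhood; $\gamma^{\rm ID}(G)$ is its minimum size. *)

theory Defs
  imports Complex_Main
begin

definition closed_nbhd :: "'a set \<Rightarrow> ('a \<Rightarrow> 'a \<Rightarrow> bool) \<Rightarrow> 'a \<Rightarrow> 'a set" where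
  "closed_nbhd V E v = {w \<in> V. w = v \<or> E v w}"

definition is_identifying_code :: "'a set \<Rightarrow> ('a \<Rightarrow> 'a \<Rightarrow> bool) \<Rightarrow> 'a set \<Rightarrow> bool" where
  "is_identifying_code V E C \<longleftrightarrow>
     C \<subseteq> V \<and>
     (\<forall>v\<in>V. closed_nbhd V E v \<inter> C \<noteq> {}) \<and>
     (\<forall>u\<in>V. \<forall>v\<in>V. u \<noteq> v \<longrightarrow> closed_nbhd V E u \<inter> C \<noteq> closed_nbhd V E v \<inter> C)"

definition gamma_ID :: "'a set \<Rightarrow> ('a \<Rightarrow> 'a \<Rightarrow> bool) \<Rightarrow> nat" where
  "gamma_ID V E = Min {card C | C. is_identifying_code V E C}"

text \<open>Vertex names after identification:
  C0 stands for c_0 = c_1, A0 for a_0 = c_2, A1 for a_1 = c_3.\<close>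

datatype zv = U0 | U1 | U2 | U3 | A0 | B0 | C0 | A1 | B1 | A2 | B2 | A3 | B3

definition Z_V :: "zv set" where
  "Z_V = {U0, U1, U2, U3, A0, B0, C0, A1, B1, A2, B2, A3, B3}"

definition Z_edges :: "(zv \<times> zv) set" where
  "Z_edges = {(U0, A0), (U0, B0), (U0, C0),
              (U1, A1), (U1, B1), (U1, C0),
              (U2, A2), (U2, B2), (U2, A0),
              (U3, A3), (U3, B3), (U3, A1)}"

definition Z_E :: "zv \<Rightarrow> zv \<Rightarrow> bool" where
  "Z_E x y \<longleftrightarrow> (x, y) \<in> Z_edges \<or> (y, x) \<in> Z_edges"

end

theory Submission
  imports Defs
begin

lemma nb:
  "closed_nbhd Z_V Z_E U0 = {U0, A0, B0, C0}"
  "closed_nbhd Z_V Z_E U1 = {U1, C0, A1, B1}"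
  "closed_nbhd Z_V Z_E U2 = {U2, A0, A2, B2}"
  "closed_nbhd Z_V Z_E U3 = {U3, A1, A3, B3}"
  "closed_nbhd Z_V Z_E A0 = {U0, U2, A0}"
  "closed_nbhd Z_V Z_E B0 = {U0, B0}"
  "closed_nbhd Z_V Z_E C0 = {U0, U1, C0}"
  "closed_nbhd Z_V Z_E A1 = {U1, U3, A1}"
  "closed_nbhd Z_V Z_E B1 = {U1, B1}"
  "closed_nbhd Z_V Z_E A2 = {U2, A2}"
  "closed_nbhd Z_V Z_E B2 = {U2, B2}"
  "closed_nbhd Z_V Z_E A3 = {U3, A3}"
  "closed_nbhd Z_V Z_E B3 = {U3, B3}"
  by (auto simp: closed_nbhd_def Z_V_def Z_E_def Z_edges_def)

lemma V: "v \<in> Z_V" unfolding Z_V_def by (cases v) auto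

lemma ballV: "(\<forall>v\<in>Z_V. P v) \<longleftrightarrow> P U0 \<and> P U1 \<and> P U2 \<and> P U3 \<and> P A0 \<and> P B0 \<and> P C0 \<and> P A1 \<and> P B1 \<and> P A2 \<and> P B2 \<and> P A3 \<and> P B3"
  unfolding Z_V_def by simp

lemma card_ind: "finite A \<Longrightarrow> C \<subseteq> A \<Longrightarrow> card C = (\<Sum>v\<in>A. if v \<in> C then 1 else 0)"
  by (simp add: sum.If_cases Int_absorb1 Int_commute)

lemma lb:
  assumes "is_identifying_code Z_V Z_E C"
  shows "8 \<le> card C"
proof -
  have sub: "C \<subseteq> Z_V" and D: "\<forall>v\<in>Z_V. closed_nbhd Z_V Z_E v \<inter> C \<noteq> {}"
    and S: "\<forall>u\<in>Z_V. \<forall>v\<in>Z_V. u \<noteq> v \<longrightarrow> closed_nbhd Z_V Z_E u \<inter> C \<noteq> closed_nbhd Z_V Z_E v \<inter> C"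
    using assms unfolding is_identifying_code_def by auto
  have c1: "U0 \<in> C \<or> A0 \<in> C \<or> B0 \<in> C \<or> C0 \<in> C" using D[rule_format, OF V, of U0] by (auto simp: nb)
  have c2: "U1 \<in> C \<or> C0 \<in> C \<or> A1 \<in> C \<or> B1 \<in> C" using D[rule_format, OF V, of U1] by (auto simp: nb)
  have c3: "U2 \<in> C \<or> A0 \<in> C \<or> A2 \<in> C \<or> B2 \<in> C" using D[rule_format, OF V, of U2] by (auto simp: nb)
  have c4: "U3 \<in> C \<or> A1 \<in> C \<or> A3 \<in> C \<or> B3 \<in> C" using D[rule_format, OF V, of U3] by (auto simp: nb)
  have c5: "U0 \<in> C \<or> U2 \<in> C \<or> A0 \<in> C" using D[rule_format, OF V, of A0] by (auto simp: nb)
  have c6: "U0 \<in> C \<or> B0 \<in> C" using D[rule_format, OF V, of B0] by (auto simp: nb)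
  have c7: "U0 \<in> C \<or> U1 \<in> C \<or> C0 \<in> C" using D[rule_format, OF V, of C0] by (auto simp: nb)
  have c8: "U1 \<in> C \<or> U3 \<in> C \<or> A1 \<in> C" using D[rule_format, OF V, of A1] by (auto simp: nb)
  have c9: "U1 \<in> C \<or> B1 \<in> C" using D[rule_format, OF V, of B1] by (auto simp: nb)
  have c10: "U2 \<in> C \<or> A2 \<in> C" using D[rule_format, OF V, of A2] by (auto simp: nb)
  have c11: "U2 \<in> C \<or> B2 \<in> C" using D[rule_format, OF V, of B2] by (auto simp: nb)
  have c12: "U3 \<in> C \<or> A3 \<in> C" using D[rule_format, OF V, of A3] by (auto simp: nb)
  have c13: "U3 \<in> C \<or> B3 \<in> C" using D[rule_format, OF V, of B3] by (auto simp: nb)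
  have c14: "U0 \<in> C \<or> U1 \<in> C \<or> A0 \<in> C \<or> B0 \<in> C \<or> A1 \<in> C \<or> B1 \<in> C" using S[rule_format, OF V V, of U0 U1] by (auto simp: nb)
  have c15: "U0 \<in> C \<or> U2 \<in> C \<or> B0 \<in> C \<or> C0 \<in> C \<or> A2 \<in> C \<or> B2 \<in> C" using S[rule_format, OF V V, of U0 U2] by (auto simp: nb)
  have c16: "U2 \<in> C \<or> B0 \<in> C \<or> C0 \<in> C" using S[rule_format, OF V V, of U0 A0] by (auto simp: nb)
  have c17: "A0 \<in> C \<or> C0 \<in> C" using S[rule_format, OF V V, of U0 B0] by (auto simp: nb)
  have c18: "U1 \<in> C \<or> A0 \<in> C \<or> B0 \<in> C" using S[rule_format, OF V V, of U0 C0] by (auto simp: nb)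
  have c19: "U1 \<in> C \<or> U3 \<in> C \<or> C0 \<in> C \<or> B1 \<in> C \<or> A3 \<in> C \<or> B3 \<in> C" using S[rule_format, OF V V, of U1 U3] by (auto simp: nb)
  have c20: "U0 \<in> C \<or> A1 \<in> C \<or> B1 \<in> C" using S[rule_format, OF V V, of U1 C0] by (auto simp: nb)
  have c21: "U3 \<in> C \<or> C0 \<in> C \<or> B1 \<in> C" using S[rule_format, OF V V, of U1 A1] by (auto simp: nb)
  have c22: "C0 \<in> C \<or> A1 \<in> C" using S[rule_format, OF V V, of U1 B1] by (auto simp: nb)
  have c23: "U0 \<in> C \<or> A2 \<in> C \<or> B2 \<in> C" using S[rule_format, OF V V, of U2 A0] by (auto simp: nb)
  have c24: "A0 \<in> C \<or> B2 \<in> C" using S[rule_format, OF V V, of U2 A2] by (auto simp: nb)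
  have c25: "A0 \<in> C \<or> A2 \<in> C" using S[rule_format, OF V V, of U2 B2] by (auto simp: nb)
  have c26: "U1 \<in> C \<or> A3 \<in> C \<or> B3 \<in> C" using S[rule_format, OF V V, of U3 A1] by (auto simp: nb)
  have c27: "A1 \<in> C \<or> B3 \<in> C" using S[rule_format, OF V V, of U3 A3] by (auto simp: nb)
  have c28: "A1 \<in> C \<or> A3 \<in> C" using S[rule_format, OF V V, of U3 B3] by (auto simp: nb)
  have c29: "U2 \<in> C \<or> A0 \<in> C \<or> B0 \<in> C" using S[rule_format, OF V V, of A0 B0] by (auto simp: nb)
  have c30: "U1 \<in> C \<or> U2 \<in> C \<or> A0 \<in> C \<or> C0 \<in> C" using S[rule_format, OF V V, of A0 C0] by (auto simp: nb)
  have c31: "U0 \<in> C \<or> A0 \<in> C \<or> A2 \<in> C" using S[rule_format, OF V V, of A0 A2] by (auto simp: nb)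
  have c32: "U0 \<in> C \<or> A0 \<in> C \<or> B2 \<in> C" using S[rule_format, OF V V, of A0 B2] by (auto simp: nb)
  have c33: "U1 \<in> C \<or> B0 \<in> C \<or> C0 \<in> C" using S[rule_format, OF V V, of B0 C0] by (auto simp: nb)
  have c34: "U0 \<in> C \<or> U3 \<in> C \<or> C0 \<in> C \<or> A1 \<in> C" using S[rule_format, OF V V, of C0 A1] by (auto simp: nb)
  have c35: "U0 \<in> C \<or> C0 \<in> C \<or> B1 \<in> C" using S[rule_format, OF V V, of C0 B1] by (auto simp: nb)
  have c36: "U3 \<in> C \<or> A1 \<in> C \<or> B1 \<in> C" using S[rule_format, OF V V, of A1 B1] by (auto simp: nb)
  have c37: "U1 \<in> C \<or> A1 \<in> C \<or> A3 \<in> C" using S[rule_format, OF V V, of A1 A3] by (auto simp: nb)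
  have c38: "U1 \<in> C \<or> A1 \<in> C \<or> B3 \<in> C" using S[rule_format, OF V V, of A1 B3] by (auto simp: nb)
  have c39: "A2 \<in> C \<or> B2 \<in> C" using S[rule_format, OF V V, of A2 B2] by (auto simp: nb)
  have c40: "A3 \<in> C \<or> B3 \<in> C" using S[rule_format, OF V V, of A3 B3] by (auto simp: nb)
  have g1: "4 \<le> ((if U2 \<in> C then 1 else 0) + (if A2 \<in> C then 1 else 0) + (if B2 \<in> C then 1 else 0) + (if A0 \<in> C then 1 else 0) + (if U0 \<in> C then 1 else 0) + (if B0 \<in> C then 1 else 0) :: nat)" using c1 c2 c3 c4 c5 c6 c7 c8 c9 c10 c11 c12 c13 c14 c15 c16 c17 c18 c19 c20 c21 c22 c23 c24 c25 c26 c27 c28 c29 c30 c31 c32 c33 c34 c35 c36 c37 c38 c39 c40 by (cases "U2 \<in> C"; cases "A2 \<in> C"; cases "B2 \<in> C"; cases "A0 \<in> C"; cases "U0 \<in> C"; cases "B0 \<in> C"; simp)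
  have g2: "4 \<le> ((if U3 \<in> C then 1 else 0) + (if A3 \<in> C then 1 else 0) + (if B3 \<in> C then 1 else 0) + (if A1 \<in> C then 1 else 0) + (if U1 \<in> C then 1 else 0) + (if B1 \<in> C then 1 else 0) :: nat)" using c1 c2 c3 c4 c5 c6 c7 c8 c9 c10 c11 c12 c13 c14 c15 c16 c17 c18 c19 c20 c21 c22 c23 c24 c25 c26 c27 c28 c29 c30 c31 c32 c33 c34 c35 c36 c37 c38 c39 c40 by (cases "U3 \<in> C"; cases "A3 \<in> C"; cases "B3 \<in> C"; cases "A1 \<in> C"; cases "U1 \<in> C"; cases "B1 \<in> C"; simp)
  have "card C = (\<Sum>v\<in>Z_V. if v \<in> C then 1 else 0)" using sub by (rule card_ind[rotated]) (simp add: Z_V_def)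
  also have "\<dots> = (if U0 \<in> C then 1 else 0) + (if U1 \<in> C then 1 else 0) + (if U2 \<in> C then 1 else 0) + (if U3 \<in> C then 1 else 0) + (if A0 \<in> C then 1 else 0) + (if B0 \<in> C then 1 else 0) + (if C0 \<in> C then 1 else 0) + (if A1 \<in> C then 1 else 0) + (if B1 \<in> C then 1 else 0) + (if A2 \<in> C then 1 else 0) + (if B2 \<in> C then 1 else 0) + (if A3 \<in> C then 1 else 0) + (if B3 \<in> C then 1 else 0)" by (simp add: Z_V_def)
  finally show ?thesis using g1 g2 by simp
qed

lemma code8: "is_identifying_code Z_V Z_E {U0, U1, U2, U3, A0, A1, A2, A3}"
  unfolding is_identifying_code_def ballV apply (simp add: nb) apply (simp add: Z_V_def)
  apply (intro conjI) apply (auto simp: set_eq_iff)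
  done

theorem mainTheorem15:
  shows "gamma_ID Z_V Z_E = 8 \<and> real (gamma_ID Z_V Z_E) < 2 / 3 * real (card Z_V)"
proof -
  let ?A = "{card C | C. is_identifying_code Z_V Z_E C}"
  have fin: "finite ?A"
  proof (rule finite_subset)
    show "?A \<subseteq> {..card Z_V}"
      by (auto simp: is_identifying_code_def intro!: card_mono) (simp add: Z_V_def)
  qed simp
  have "8 \<in> ?A" using code8 by force
  hence g: "gamma_ID Z_V Z_E = 8" unfolding gamma_ID_def
    by (intro Min_eqI[OF fin]) (auto dest: lb)
  have "card Z_V = 13" by (simp add: Z_V_def)
  with g show ?thesis by simp
qed

end
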